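(* Let $p$ be an odd prime, let $L/\mathbb{Q}_p$ be a finite unramified extension with ring of integers $\mathcal{O}_L$ and maximal ideal $\mathfrak{m}_L$. Let $F\in \mathcal{O}_L\langle\langle t\rangle\rangle$ be non-zero. Then $F$ has only finitely many zeroes in $\mathfrak{m}_L$. Moreover, if $k\ge 1$ and the reduction $\overline{F}\in (\mathcal{O}_L/\mathfrak{m}_L^k)\langle\langle t\rangle\rangle$ is non-zero, then the number of zeroes of $F$ in $\mathfrak{m}_L$ is bounded by a constant depending only on $\overline{F}$; that is, for every $k\ge1$ and every non-zero $G\in(\mathcal{O}_L/\mathfrak{m}_L^k)\langle\langle t\rangle\rangle$ there is $N(G)$ such that every $F\in\mathcal{O}_L\langle\langle t\rangle\rangle$ with $\overline{F}=G$ has at most $N(G)$ zeroes in $\mathfrak{m}_L$.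
   Context: For a commutative ring $R$, the divided power algebra $R\langle\langle t\rangle\rangle$ consists of formal sums $\sum_{n\ge0} a_n t^{[n]}$ with $a_n\in R$, with multiplication $t^{[n]}t^{[m]}=\binom{n+m}{n}t^{[n+m]}$. For $R=\mathcal{O}_L$ we regard $\mathcal{O}_L\langle\langle t\rangle\rangle$ as a subring of $L[[t]]$ via $t^{[n]}\mapsto t^n/n!$; such series converge on $\mathfrak{m}_L$ (as $p$ is odd and $L$ unramified), and a zero of $F$ in $\mathfrak{m}_L$ means a point $x\in\mathfrak{m}_L$ with $F(x)=\sum a_n x^n/n!=0$. The reduction map $\mathcal{O}_L\langle\langle t\rangle\rangle\to(\mathcal{O}_L/\mathfrak{m}_L^k)\langle\langle t\rangle\rangle$, $F\mapsto\overline{F}$, reduces each coefficient $a_n$ modulo $\mathfrak{m}_L^k$ and sends $t^{[n]}\mapsto t^{[n]}$. *)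

theory Defs
  imports Main "HOL-Computational_Algebra.Primes"
begin

(* A field L is modelled abstractly by its normalised discrete valuation
   v :: L => int (the value v 0 is irrelevant; 0 has valuation +infinity). *)

definition vge :: "('a::field \<Rightarrow> int) \<Rightarrow> 'a \<Rightarrow> int \<Rightarrow> bool" where
  "vge v x n \<longleftrightarrow> x = 0 \<or> n \<le> v x"

definition vcong :: "('a::field \<Rightarrow> int) \<Rightarrow> 'a \<Rightarrow> 'a \<Rightarrow> nat \<Rightarrow> bool" where
  "vcong v x y k \<longleftrightarrow> vge v (x - y) (int k)"

definition vconv :: "('a::field \<Rightarrow> int) \<Rightarrow> (nat \<Rightarrow> 'a) \<Rightarrow> 'a \<Rightarrow> bool" where
  "vconv v s l \<longleftrightarrow> (\<forall>M::int. \<exists>N. \<forall>n\<ge>N. vge v (s n - l) M)"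

(* L is a finite unramified extension of Q_p: a complete discretely valued field of
   characteristic 0 (type class), with finite residue field, and p a uniformiser
   (v normalised with v p = 1).  Such fields are exactly the finite unramified
   extensions of Q_p. *)
definition unram_padic_field :: "nat \<Rightarrow> ('a::field_char_0 \<Rightarrow> int) \<Rightarrow> bool" where
  "unram_padic_field p v \<longleftrightarrow>
     (\<forall>x y. x \<noteq> 0 \<longrightarrow> y \<noteq> 0 \<longrightarrow> v (x * y) = v x + v y) \<and>
     (\<forall>x y. x \<noteq> 0 \<longrightarrow> y \<noteq> 0 \<longrightarrow> x + y \<noteq> 0 \<longrightarrow> min (v x) (v y) \<le> v (x + y)) \<and>
     v (of_nat p) = 1 \<and>
     (\<exists>S. finite S \<and> (\<forall>x. vge v x 0 \<longrightarrow> (\<exists>s\<in>S. vge v (x - s) 1))) \<and>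
     (\<forall>s. (\<forall>M::int. \<exists>N. \<forall>m\<ge>N. \<forall>n\<ge>N. vge v (s m - s n) M) \<longrightarrow> (\<exists>l. vconv v s l))"

(* an element of O_L<<t>>, given by its coefficient sequence a (F = sum a_n t^[n]) *)
definition dp_integral :: "('a::field \<Rightarrow> int) \<Rightarrow> (nat \<Rightarrow> 'a) \<Rightarrow> bool" where
  "dp_integral v a \<longleftrightarrow> (\<forall>n. vge v (a n) 0)"

definition dp_zeros :: "('a::field_char_0 \<Rightarrow> int) \<Rightarrow> (nat \<Rightarrow> 'a) \<Rightarrow> 'a set" where
  "dp_zeros v a = {x. vge v x 1 \<and> vconv v (\<lambda>N. \<Sum>n<N. a n * x ^ n / fact n) 0}"

end

theory Submission
  imports Defs
begin


fun hh :: "'a::comm_ring_1 list \<Rightarrow> nat \<Rightarrow> 'a" where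
  "hh [] 0 = 1"
| "hh [] (Suc d) = 0"
| "hh (x#xs) 0 = 1"
| "hh (x#xs) (Suc d) = hh xs (Suc d) + x * hh (x#xs) d"

fun dd :: "('a::field \<Rightarrow> 'a) \<Rightarrow> 'a list \<Rightarrow> 'a" where
  "dd f [] = 0"
| "dd f [x] = f x"
| "dd f (x#y#zs) = (dd f (x#zs) - dd f (y#zs)) / (x - y)"

lemma dd_induct:
  assumes "P []" "\<And>x. P [x]" "\<And>x y zs. P (x#zs) \<Longrightarrow> P (y#zs) \<Longrightarrow> P (x#y#zs)"
  shows "P xs"
proof (induction "length xs" arbitrary: xs rule: less_induct)
  case less
  show ?case
  proof (cases xs)
    case Nil then show ?thesis using assms by simp
  next
    case (Cons x ys)
    show ?thesis
    proof (cases ys)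
      case Nil then show ?thesis using assms Cons by simp
    next
      case (Cons y zs)
      then show ?thesis using assms(3) less \<open>xs = x#ys\<close> by simp
    qed
  qed
qed

lemma hh_diff: "hh (x#zs) (Suc d) - hh (y#zs) (Suc d) = (x - y) * hh (x#y#zs) d"
proof (induction d)
  case 0
  then show ?case by simp
next
  case (Suc d)
  have "hh (x#zs) (Suc (Suc d)) - hh (y#zs) (Suc (Suc d))
     = x * hh (x#zs) (Suc d) - y * hh (y#zs) (Suc d)" by simp
  also have "\<dots> = (x - y) * hh (y#zs) (Suc d) + x * (hh (x#zs) (Suc d) - hh (y#zs) (Suc d))"
    by (simp add: algebra_simps)
  also have "\<dots> = (x - y) * hh (y#zs) (Suc d) + x * ((x - y) * hh (x#y#zs) d)"
    using Suc by simp
  also have "\<dots> = (x - y) * (hh (y#zs) (Suc d) + x * hh (x#y#zs) d)"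
    by (simp add: algebra_simps)
  also have "\<dots> = (x - y) * hh (x#y#zs) (Suc d)"
    by simp
  finally show ?case .
qed

lemma hh_single: "hh [x] n = x ^ n"
  by (induction n) auto

lemma dd_pow:
  fixes xs :: "'a::field list"
  shows "distinct xs \<Longrightarrow> length xs = Suc L \<Longrightarrow>
    dd (\<lambda>x. x ^ n) xs = (if n < L then 0 else hh xs (n - L))"
proof (induction xs arbitrary: L rule: dd_induct)
  case 1 then show ?case by simp
next
  case (2 x) then show ?case by (simp add: hh_single)
next
  case (3 x y zs)
  then obtain L' where L: "L = Suc L'" "length zs = L'" by auto
  have xy: "x - y \<noteq> 0" using 3 by auto
  have A: "dd (\<lambda>x. x ^ n) (x#zs) = (if n < L' then 0 else hh (x#zs) (n - L'))"
    using 3 L by auto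
  have B: "dd (\<lambda>x. x ^ n) (y#zs) = (if n < L' then 0 else hh (y#zs) (n - L'))"
    using 3 L by auto
  show ?case
  proof (cases "n < L")
    case True
    then show ?thesis using A B L by (cases "n < L'") (auto simp: less_Suc_eq)
  next
    case False
    then have e: "n - L' = Suc (n - L)" using L by simp
    have "dd (\<lambda>x. x ^ n) (x#y#zs) = (hh (x#zs) (Suc (n - L)) - hh (y#zs) (Suc (n - L))) / (x - y)"
      using A B False L by (simp del: hh.simps add: e)
    also have "\<dots> = hh (x#y#zs) (n - L)" using xy by (simp only: hh_diff) simp
    finally show ?thesis using False by simp
  qed
qed

lemma dd_sum: "dd (\<lambda>x. \<Sum>n\<in>A. g n x) xs = (\<Sum>n\<in>A. dd (g n) xs)"
  by (induction xs rule: dd_induct) (auto simp: sum_subtractf[symmetric] sum_divide_distrib)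

lemma dd_cmult: "dd (\<lambda>x. c * f x) xs = c * dd f xs"
  by (induction xs rule: dd_induct) (auto simp: algebra_simps diff_divide_distrib)



lemma dd_zero: "(\<And>x. x \<in> set xs \<Longrightarrow> f x = 0) \<Longrightarrow> dd f xs = 0"
  by (induction xs rule: dd_induct) auto

locale vfield =
  fixes v :: "'a::field_char_0 \<Rightarrow> int" and p :: nat
  assumes mult: "x \<noteq> 0 \<Longrightarrow> y \<noteq> 0 \<Longrightarrow> v (x*y) = v x + v y"
  and ultra: "x \<noteq> 0 \<Longrightarrow> y \<noteq> 0 \<Longrightarrow> x + y \<noteq> 0 \<Longrightarrow> min (v x) (v y) \<le> v (x+y)"
  and vp: "v (of_nat p) = 1" and pprime: "prime p" and podd: "odd p"
begin

lemma v1: "v 1 = 0" using mult[of 1 1] by simp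

lemma vm1: "v (-1) = 0" using mult[of "-1" "-1"] v1 by simp

lemma vneg: "v (- x) = v x"
proof (cases "x = 0")
  case False then show ?thesis using mult[of "-1" x] vm1 by simp
qed simp

lemma vge_0[simp]: "vge v 0 n" by (simp add: vge_def)

lemma vge_nz: "x \<noteq> 0 \<Longrightarrow> vge v x n \<longleftrightarrow> n \<le> v x" by (simp add: vge_def)

lemma vge_self: "vge v x (v x)" by (simp add: vge_def)

lemma vge_add: assumes "vge v x n" "vge v y n" shows "vge v (x+y) n"
  using assms ultra[of x y] unfolding vge_def by (cases "x = 0"; cases "y = 0"; cases "x+y = 0") auto

lemma vge_uminus: "vge v x n \<Longrightarrow> vge v (-x) n" by (simp add: vge_def vneg)

lemma vge_diff: "vge v x n \<Longrightarrow> vge v y n \<Longrightarrow> vge v (x-y) n"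
  using vge_add[of x n "-y"] vge_uminus[of y n] by simp

lemma vge_mult: "vge v x m \<Longrightarrow> vge v y n \<Longrightarrow> vge v (x*y) (m+n)"
  unfolding vge_def using mult[of x y] by (cases "x = 0"; cases "y = 0") auto

lemma vge_mono: "vge v x n \<Longrightarrow> m \<le> n \<Longrightarrow> vge v x m" by (auto simp: vge_def)

lemma vge_sum: "(\<And>i. i\<in>A \<Longrightarrow> vge v (f i) n) \<Longrightarrow> vge v (sum f A) n"
proof (induction A rule: infinite_finite_induct)
  case (insert x F) then show ?case by (simp add: vge_add)
qed auto

lemma vge_1: "vge v 1 0" by (simp add: vge_def v1)

lemma vge_of_nat: "vge v (of_nat k) 0"
  by (induction k) (auto simp: vge_1 vge_add)

lemma vge_of_int: "vge v (of_int z) 0"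
proof (cases "z \<ge> 0")
  case True then have "of_int z = (of_nat (nat z) :: 'a)" by simp
  then show ?thesis using vge_of_nat by metis
next
  case False then have "of_int z = - (of_nat (nat (-z)) :: 'a)" by simp
  then show ?thesis using vge_of_nat vge_uminus by metis
qed

lemma v_of_nat_nonneg: "k > 0 \<Longrightarrow> v (of_nat k) \<ge> 0"
  using vge_of_nat[of k] by (simp add: vge_def)

lemma vge_p: "vge v (of_nat p) 1" by (simp add: vge_def vp)

lemma v_of_nat_coprime: assumes "\<not> p dvd k" shows "v (of_nat k) = 0"
proof -
  have k0: "k > 0" using assms by (cases k) auto
  have "coprime p k" using prime_imp_coprime[OF pprime assms] .
  then have "coprime (int p) (int k)" by simp
  then obtain u w :: int where uw: "u * int k + w * int p = 1"
    using bezout_int[of "int k" "int p"] by (metis coprime_imp_gcd_eq_1 gcd.commute)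
  have e: "of_int u * of_nat k + of_int w * of_nat p = (1::'a)"
    using arg_cong[OF uw, of "of_int :: int \<Rightarrow> 'a"] by simp
  show ?thesis
  proof (rule ccontr)
    assume "v (of_nat k) \<noteq> 0"
    then have "vge v (of_nat k :: 'a) 1" using v_of_nat_nonneg[OF k0] k0 by (simp add: vge_def)
    then have h1: "vge v (of_int u * of_nat k :: 'a) (0 + 1)"
      by (intro vge_mult vge_of_int)
    have h2: "vge v (of_int w * of_nat p :: 'a) (0 + 1)"
      by (intro vge_mult vge_of_int vge_p)
    have "vge v (of_int u * of_nat k + of_int w * of_nat p :: 'a) 1"
      using vge_add[OF h1 h2] by simp
    then show False using e by (simp add: vge_def v1)
  qed
qed

lemma p_gt1: "p > 1" using pprime prime_gt_1_nat by blast
lemma p_ge3: "p \<ge> 3"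
proof -
  have "p \<noteq> 2" using podd by auto
  then show ?thesis using p_gt1 by linarith
qed

lemma v_fact_rec: "v (fact n :: 'a) = int (n div p) + v (fact (n div p) :: 'a)"
proof (induction n)
  case 0 then show ?case by simp
next
  case (Suc n)
  have f: "(fact (Suc n) :: 'a) = of_nat (Suc n) * fact n" by (simp add: fact_Suc)
  have vf: "v (fact (Suc n) :: 'a) = v (of_nat (Suc n) :: 'a) + v (fact n :: 'a)"
    unfolding f by (rule mult) (simp only: of_nat_eq_0_iff nat.distinct not_False_eq_True, rule fact_nonzero)
  show ?case
  proof (cases "p dvd Suc n")
    case True
    then obtain j where j: "Suc n = p * j" by blast
    then have j0: "j > 0" by (cases j) auto
    have d1: "Suc n div p = j" using j p_gt1 by simp
    have d2: "n div p = j - 1"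
    proof (rule div_nat_eqI)
      have "p * j = p * (j - 1) + p" using j0 by (cases j) (auto simp: algebra_simps)
      then show "p * (j - 1) \<le> n" "n < p * Suc (j - 1)" using j p_gt1 j0 by (auto simp: algebra_simps)
    qed
    have "v (of_nat (Suc n) :: 'a) = v (of_nat p * of_nat j :: 'a)" unfolding j by simp
    also have "\<dots> = 1 + v (of_nat j :: 'a)" using j0 p_gt1 by (subst mult) (auto simp: vp)
    finally have a: "v (of_nat (Suc n) :: 'a) = 1 + v (of_nat j :: 'a)" .
    have fj: "(fact j :: 'a) = of_nat j * fact (j - 1)" using j0
      by (cases j) (simp_all add: fact_Suc)
    have b: "v (fact j :: 'a) = v (of_nat j :: 'a) + v (fact (j - 1) :: 'a)"
      unfolding fj using j0 by (subst mult) auto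
    have "v (fact (Suc n) :: 'a) = 1 + v (of_nat j :: 'a) + (int (j - 1) + v (fact (j - 1) :: 'a))"
      using vf a Suc.IH d2 by simp
    also have "\<dots> = int j + v (fact j :: 'a)" using b j0 by simp
    finally show ?thesis using d1 by simp
  next
    case False
    have d: "Suc n div p = n div p" using False div_Suc[of n p] by (auto simp: dvd_eq_mod_eq_0)
    show ?thesis using vf v_of_nat_coprime[OF False] Suc.IH d by simp
  qed
qed

lemma v_fact_bound: "2 * v (fact n :: 'a) \<le> int n"
proof (induction n rule: less_induct)
  case (less n)
  show ?case
  proof (cases "n = 0")
    case True then show ?thesis by (simp add: v1)
  next
    case False
    have lt: "n div p < n" using False p_gt1 by simp
    have "3 * (n div p) \<le> p * (n div p)" using p_ge3 by simp
    also have "\<dots> \<le> n" by simp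
    finally have "3 * (n div p) \<le> n" .
    then show ?thesis using less[OF lt] v_fact_rec[of n] by linarith
  qed
qed

lemma v_fact_nonneg: "v (fact n :: 'a) \<ge> 0"
proof -
  have "v (of_nat (fact n) :: 'a) \<ge> 0" by (rule v_of_nat_nonneg) simp
  then show ?thesis by simp
qed

lemma vconv_diff: assumes "vconv v s 0" "vconv v t 0" shows "vconv v (\<lambda>M. s M - t M) 0"
  unfolding vconv_def
proof
  fix M
  obtain N1 where 1: "\<forall>n\<ge>N1. vge v (s n - 0) M" using assms(1) unfolding vconv_def by blast
  obtain N2 where 2: "\<forall>n\<ge>N2. vge v (t n - 0) M" using assms(2) unfolding vconv_def by blast
  have "\<forall>n\<ge>max N1 N2. vge v (s n - t n - 0) M" using 1 2 by (auto intro: vge_diff)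
  then show "\<exists>N. \<forall>n\<ge>N. vge v (s n - t n - 0) M" by blast
qed

lemma vconv_div: assumes "vconv v s 0" shows "vconv v (\<lambda>M. s M / c) 0"
proof (cases "c = 0")
  case True then show ?thesis by (simp add: vconv_def)
next
  case False
  show ?thesis unfolding vconv_def
  proof
    fix M
    obtain N where N: "\<forall>n\<ge>N. vge v (s n - 0) (M - v (inverse c))" using assms unfolding vconv_def by blast
    have "\<forall>n\<ge>N. vge v (s n / c - 0) M"
    proof (intro allI impI)
      fix n assume "n \<ge> N"
      have "vge v (s n * inverse c) (M - v (inverse c) + v (inverse c))"
        by (rule vge_mult[OF _ vge_self]) (use N \<open>n \<ge> N\<close> in auto)
      then show "vge v (s n / c - 0) M" by (simp add: divide_inverse)
    qed
    then show "\<exists>N. \<forall>n\<ge>N. vge v (s n / c - 0) M" by blast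
  qed
qed

lemma dd_vconv: "(\<And>x. x \<in> set xs \<Longrightarrow> vconv v (\<lambda>M. s M x) 0) \<Longrightarrow> vconv v (\<lambda>M. dd (s M) xs) 0"
proof (induction xs rule: dd_induct)
  case 1 then show ?case by (simp add: vconv_def)
next
  case (3 x y zs)
  have "vconv v (\<lambda>M. (dd (s M) (x#zs) - dd (s M) (y#zs)) / (x - y)) 0"
    using 3 by (intro vconv_div vconv_diff) auto
  then show ?case by simp
qed simp

lemma hh_vge: "(\<And>x. x \<in> set xs \<Longrightarrow> vge v x 1) \<Longrightarrow> vge v (hh xs d) (int d)"
proof (induction xs d rule: hh.induct)
  case (4 x xs d)
  have "vge v (x * hh (x#xs) d) (1 + int d)" using 4 by (intro vge_mult) auto
  moreover have "vge v (hh xs (Suc d)) (int (Suc d))" using 4 by auto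
  ultimately show ?case by (simp add: vge_add add.commute)
qed (auto simp: vge_1)

end


lemma hh_0: "hh xs 0 = 1" by (cases xs) auto

context vfield begin

lemma main:
  assumes integ: "\<forall>n. vge v (a n) 0" and am: "a m \<noteq> 0"
  shows "finite (dp_zeros v a) \<and> card (dp_zeros v a) \<le> 2 * nat (v (a m) + int m)"
proof -
  define c where "c n = a n / fact n" for n
  define W where "W n = v (c n) + int n" for n
  have cnz: "c n \<noteq> 0 \<longleftrightarrow> a n \<noteq> 0" for n by (simp add: c_def)
  have vc: "v (c n) = v (a n) - v (fact n :: 'a)" if "a n \<noteq> 0" for n
  proof -
    have e: "a n = c n * fact n" by (simp add: c_def)
    have cn: "c n \<noteq> 0" using cnz[of n] that by blast
    have "v (c n * fact n) = v (c n) + v (fact n :: 'a)" by (rule mult) (use cn in auto)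
    then have "v (a n) = v (c n) + v (fact n :: 'a)" by (subst e)
    then show ?thesis by simp
  qed
  have Wlow: "int n \<le> 2 * W n" if "a n \<noteq> 0" for n
  proof -
    have "vge v (a n) 0" using integ by blast
    then have "0 \<le> v (a n)" using that by (simp add: vge_def)
    moreover have "v (c n) = v (a n) - v (fact n :: 'a)" using vc[OF that] .
    moreover have "2 * v (fact n :: 'a) \<le> int n" using v_fact_bound[of n] .
    ultimately show ?thesis unfolding W_def distrib_left by linarith
  qed
  have Wm: "W m \<le> v (a m) + int m"
    using vc[OF am] v_fact_nonneg[of m] unfolding W_def by linarith
  have Wm0: "W m \<ge> 0" using Wlow[OF am] by linarith
  define B where "B = nat (W m)"
  define S where "S = {n. n \<le> 2 * B \<and> a n \<noteq> 0}"
  have finS: "finite S" unfolding S_def by simp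
  have mS: "m \<in> S" unfolding S_def B_def using Wlow[OF am] am by auto
  define \<mu> where "\<mu> = Min (W ` S)"
  have \<mu>in: "\<mu> \<in> W ` S" unfolding \<mu>_def using finS mS by (intro Min_in) auto
  have \<mu>le: "n \<in> S \<Longrightarrow> \<mu> \<le> W n" for n unfolding \<mu>_def using finS by simp
  define T where "T = {n\<in>S. W n = \<mu>}"
  have finT: "finite T" unfolding T_def using finS by simp
  have Tne: "T \<noteq> {}" unfolding T_def using \<mu>in by auto
  define N where "N = Max T"
  have NT: "N \<in> T" unfolding N_def using finT Tne by (rule Max_in)
  have aN: "a N \<noteq> 0" and WN: "W N = \<mu>" using NT unfolding T_def S_def by auto
  have \<mu>m: "\<mu> \<le> W m" using \<mu>le[OF mS] .
  have hgt: "\<mu> < W n" if "N < n" "a n \<noteq> 0" for n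
  proof (cases "n \<in> S")
    case True
    have "W n \<noteq> \<mu>"
    proof
      assume "W n = \<mu>"
      then have "n \<in> T" unfolding T_def using True by simp
      then have "n \<le> N" unfolding N_def using finT by simp
      then show False using that by simp
    qed
    then show ?thesis using \<mu>le[OF True] by simp
  next
    case False
    then have "n > 2 * B" unfolding S_def using that by auto
    then have "int n > 2 * W m" unfolding B_def using Wm0 by linarith
    then show ?thesis using Wlow[OF that(2)] \<mu>m by linarith
  qed
  have Nle: "N \<le> 2 * nat (v (a m) + int m)"
    using Wlow[OF aN] WN \<mu>m Wm by linarith
  have key: "card Z \<le> N" if finZ: "finite Z" and Zsub: "Z \<subseteq> dp_zeros v a" for Z
  proof (rule ccontr)
    assume "\<not> card Z \<le> N"
    then obtain Z' where Z': "Z' \<subseteq> Z" "card Z' = Suc N"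
      using obtain_subset_with_card_n[of "Suc N" Z] by auto
    have finZ': "finite Z'" using Z'(1) finZ finite_subset by blast
    obtain xs where xs: "set xs = Z'" "distinct xs" using finite_distinct_list[OF finZ'] by blast
    have len: "length xs = Suc N" using xs Z'(2) distinct_card by fastforce
    have xsZ: "x \<in> dp_zeros v a" if "x \<in> set xs" for x using that xs Z'(1) Zsub by auto
    define s where "s M x = (\<Sum>n<M. c n * x ^ n)" for M x
    have conv: "vconv v (\<lambda>M. s M x) 0" if "x \<in> set xs" for x
    proof -
      have "vconv v (\<lambda>N. \<Sum>n<N. a n * x ^ n / fact n) 0" using xsZ[OF that] unfolding dp_zeros_def by simp
      moreover have "(\<lambda>N. \<Sum>n<N. a n * x ^ n / fact n) = (\<lambda>M. s M x)"
        unfolding s_def c_def by (simp add: algebra_simps)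
      ultimately show ?thesis by simp
    qed
    have xs1: "vge v x 1" if "x \<in> set xs" for x using xsZ[OF that] unfolding dp_zeros_def by simp
    have dconv: "vconv v (\<lambda>M. dd (s M) xs) 0" using conv by (rule dd_vconv)
    have ddform: "dd (s M) xs = (\<Sum>n<M. c n * (if n < N then 0 else hh xs (n - N)))" for M
    proof -
      have "dd (s M) xs = (\<Sum>n<M. dd (\<lambda>x. c n * x ^ n) xs)"
        unfolding s_def by (rule dd_sum)
      also have "\<dots> = (\<Sum>n<M. c n * dd (\<lambda>x. x ^ n) xs)" by (simp add: dd_cmult)
      also have "\<dots> = (\<Sum>n<M. c n * (if n < N then 0 else hh xs (n - N)))"
        using dd_pow[OF xs(2) len] by simp
      finally show ?thesis .
    qed
    obtain M0 where M0: "\<forall>M\<ge>M0. vge v (dd (s M) xs - 0) (\<mu> - int N + 1)"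
      using dconv unfolding vconv_def by blast
    define M where "M = max M0 (Suc N)"
    define R where "R = (\<Sum>n<M. if N < n then c n * hh xs (n - N) else 0)"
    have split: "dd (s M) xs = c N + R"
    proof -
      have "dd (s M) xs = (\<Sum>n<M. (if n = N then c N else 0) + (if N < n then c n * hh xs (n - N) else 0))"
        unfolding ddform by (rule sum.cong) (auto simp: hh_0)
      also have "\<dots> = c N + R" unfolding R_def sum.distrib M_def by simp
      finally show ?thesis .
    qed
    have vR: "vge v R (\<mu> - int N + 1)" unfolding R_def
    proof (rule vge_sum)
      fix n assume "n \<in> {..<M}"
      show "vge v (if N < n then c n * hh xs (n - N) else 0) (\<mu> - int N + 1)"
      proof (cases "N < n \<and> a n \<noteq> 0")
        case True
        have "vge v (c n * hh xs (n - N)) (v (c n) + int (n - N))"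
          by (rule vge_mult[OF vge_self hh_vge]) (use xs1 in auto)
        moreover have "\<mu> - int N + 1 \<le> v (c n) + int (n - N)"
          using hgt[of n] True unfolding W_def by auto
        ultimately show ?thesis using True by (auto intro: vge_mono)
      next
        case False
        then show ?thesis by (auto simp: c_def)
      qed
    qed
    have "vge v (dd (s M) xs) (\<mu> - int N + 1)" using M0 unfolding M_def by simp
    then have "vge v (dd (s M) xs - R) (\<mu> - int N + 1)" using vR by (rule vge_diff)
    then have "vge v (c N) (\<mu> - int N + 1)" using split by simp
    moreover have "c N \<noteq> 0" using aN cnz by simp
    moreover have "v (c N) = \<mu> - int N" using WN unfolding W_def by simp
    ultimately show False by (simp add: vge_def)
  qed
  have fin: "finite (dp_zeros v a)"
  proof (rule ccontr)
    assume "infinite (dp_zeros v a)"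
    then obtain Z where "Z \<subseteq> dp_zeros v a" "finite Z" "card Z = Suc N"
      using infinite_arbitrarily_large by blast
    then show False using key by fastforce
  qed
  then show ?thesis using key[OF fin] Nle by simp
qed

end

theorem lemma2p4:
  fixes v :: "'a::field_char_0 \<Rightarrow> int" and p :: nat
  assumes "prime p" and "odd p" and "unram_padic_field p v"
  shows "(\<forall>a. dp_integral v a \<and> (\<exists>n. a n \<noteq> 0) \<longrightarrow> finite (dp_zeros v a)) \<and>
         (\<forall>k::nat. k \<ge> 1 \<longrightarrow> (\<forall>g. dp_integral v g \<and> (\<exists>n. \<not> vcong v (g n) 0 k) \<longrightarrow>
            (\<exists>N::nat. \<forall>a. dp_integral v a \<and> (\<forall>n. vcong v (a n) (g n) k) \<longrightarrow>
               finite (dp_zeros v a) \<and> card (dp_zeros v a) \<le> N)))"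
proof -
  interpret vfield v p
    using assms unfolding unram_padic_field_def by unfold_locales auto
  have P1: "finite (dp_zeros v a)" if "dp_integral v a" "a n \<noteq> 0" for a n
    using main[of a n] that unfolding dp_integral_def by blast
  have P2: "\<exists>N::nat. \<forall>a. dp_integral v a \<and> (\<forall>n. vcong v (a n) (g n) k) \<longrightarrow>
               finite (dp_zeros v a) \<and> card (dp_zeros v a) \<le> N"
    if "\<not> vcong v (g m) 0 k" for g k m
  proof (intro exI[of _ "2 * (k + m)"] allI impI)
    fix a assume a: "dp_integral v a \<and> (\<forall>n. vcong v (a n) (g n) k)"
    have c: "vge v (a m - g m) (int k)" using a unfolding vcong_def by blast
    have ng: "\<not> vge v (g m) (int k)" using that unfolding vcong_def by simp
    have nv: "\<not> vge v (a m) (int k)"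
    proof
      assume "vge v (a m) (int k)"
      then have "vge v (a m - (a m - g m)) (int k)" using c by (rule vge_diff)
      then show False using ng by simp
    qed
    then have am: "a m \<noteq> 0" and vl: "v (a m) < int k" by (auto simp: vge_def)
    have "finite (dp_zeros v a) \<and> card (dp_zeros v a) \<le> 2 * nat (v (a m) + int m)"
      using main[of a m] a am unfolding dp_integral_def by blast
    moreover have "nat (v (a m) + int m) \<le> k + m" using vl by (simp add: nat_le_iff)
    then have "2 * nat (v (a m) + int m) \<le> 2 * (k + m)" by simp
    ultimately show "finite (dp_zeros v a) \<and> card (dp_zeros v a) \<le> 2 * (k + m)" by linarith
  qed
  show ?thesis using P1 P2 by blast
qed

end
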